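(* Let $f:\mathbb{R}^n\to\mathbb{R}$ be $L$-smooth and $\mu$-strongly convex with $0<\mu<L$ and minimizer $x_*$, and let $R=\|x^0-x_*\|_2$. Then the iterates of Algorithm AGMsDR-SC (either option) satisfy, for every $k\ge1$, $$f(x^k)-f(x_* )\le\min\left\{\frac{2LR^2}{k^2},\ \left(1-\sqrt{\frac\mu L}\right)^{k-1}LR^2\right\}.$$
   Context: $\|\cdot\|=\|\cdot\|_2$ is the Euclidean norm on $\mathbb{R}^n$. $f$ is $L$-smooth if it is continuously differentiable with $\|\nabla f(x)-\nabla f(y)\|_2\le L\|x-y\|_2$ for all $x,y$; $f$ is $\mu$-strongly convex if $f(y)\ge f(x)+\langle\nabla f(x),y-x\rangle+\frac\mu2\|y-x\|_2^2$ for all $x,y$. Algorithm AGMsDR-SC (input $x^0$, and $L$ for Option (a)): set $A_0=0$, $\tau_0=1$, $v^0=x^0$, $\psi_0(x)=\frac12\|x-x^0\|_2^2$. For $k=0,1,2,\dots$: 1. Choose $\beta_k\in\arg\min_{\beta\in[0,1]} f(v^k+\beta(x^k-v^k))$ and set $y^k=v^k+\beta_k(x^k-v^k)$. 2. Option (a): $x^{k+1}=y^k-\frac1L\nabla f(y^k)$, and $a_{k+1}>0$ solves $\frac{a_{k+1}^2}{(\tau_k+\mu a_{k+1})(A_k+a_{k+1})}=\frac1L$. Option (b): $h_{k+1}\in\arg\min_{h\ge0}f\big(y^k-h\,\nabla f(y^k)/\|\nabla f(y^k)\|_2\big)$, $x^{k+1}=y^k-h_{k+1}\nabla f(y^k)/\|\nabla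 f(y^k)\|_2$, and $a_{k+1}$ is the largest solution of $$f(y^k)-\frac{a_{k+1}^2\|\nabla f(y^k)\|_2^2}{2(\tau_k+\mu a_{k+1})(A_k+a_{k+1})}+\frac{\mu\tau_ka_{k+1}\|v^k-y^k\|_2^2}{2(\tau_k+\mu a_{k+1})(A_k+a_{k+1})}=f(x^{k+1}).$$ 3. $A_{k+1}=A_k+a_{k+1}$, $\tau_{k+1}=\tau_k+\mu a_{k+1}$; $\psi_{k+1}(x)=\psi_k(x)+a_{k+1}\{f(y^k)+\langle\nabla f(y^k),x-y^k\rangle+\frac\mu2\|x-y^k\|_2^2\}$; $v^{k+1}=\arg\min_x\psi_{k+1}(x)$. All minima are assumed attained and $\nabla f(y^k)\neq0$ for all iterations considered. *)

theory Defs
  imports "HOL-Analysis.Analysis"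
begin

definition is_gradient :: "(real^'n \<Rightarrow> real) \<Rightarrow> (real^'n \<Rightarrow> real^'n) \<Rightarrow> bool" where
  "is_gradient f grad \<longleftrightarrow> (\<forall>x. (f has_derivative (\<lambda>h. grad x \<bullet> h)) (at x))"

definition L_smooth :: "(real^'n \<Rightarrow> real) \<Rightarrow> (real^'n \<Rightarrow> real^'n) \<Rightarrow> real \<Rightarrow> bool" where
  "L_smooth f grad L \<longleftrightarrow> is_gradient f grad \<and> continuous_on UNIV grad \<and>
     (\<forall>x y. norm (grad x - grad y) \<le> L * norm (x - y))"

definition strongly_convex :: "(real^'n \<Rightarrow> real) \<Rightarrow> (real^'n \<Rightarrow> real^'n) \<Rightarrow> real \<Rightarrow> bool" where
  "strongly_convex f grad \<mu> \<longleftrightarrow> is_gradient f grad \<and>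
     (\<forall>x y. f y \<ge> f x + grad x \<bullet> (y - x) + \<mu> / 2 * (norm (y - x))\<^sup>2)"

text \<open>Common part of AGMsDR-SC (steps 1 and 3, initialisation).\<close>
definition agmsdr_common ::
  "(real^'n \<Rightarrow> real) \<Rightarrow> (real^'n \<Rightarrow> real^'n) \<Rightarrow> real \<Rightarrow>
   (nat \<Rightarrow> real^'n) \<Rightarrow> (nat \<Rightarrow> real^'n) \<Rightarrow> (nat \<Rightarrow> real^'n) \<Rightarrow>
   (nat \<Rightarrow> real) \<Rightarrow> (nat \<Rightarrow> real) \<Rightarrow> (nat \<Rightarrow> real) \<Rightarrow> (nat \<Rightarrow> real) \<Rightarrow>
   (nat \<Rightarrow> real^'n \<Rightarrow> real) \<Rightarrow> bool" where
  "agmsdr_common f grad \<mu> x v y beta a A tau psi \<longleftrightarrow>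
     A 0 = 0 \<and> tau 0 = 1 \<and> v 0 = x 0 \<and>
     (\<forall>z. psi 0 z = 1/2 * (norm (z - x 0))\<^sup>2) \<and>
     (\<forall>k. beta k \<in> {0..1} \<and>
          (\<forall>b\<in>{0..1}. f (v k + beta k *\<^sub>R (x k - v k)) \<le> f (v k + b *\<^sub>R (x k - v k))) \<and>
          y k = v k + beta k *\<^sub>R (x k - v k)) \<and>
     (\<forall>k. A (Suc k) = A k + a (Suc k) \<and> tau (Suc k) = tau k + \<mu> * a (Suc k) \<and>
          (\<forall>z. psi (Suc k) z = psi k z + a (Suc k) *
               (f (y k) + grad (y k) \<bullet> (z - y k) + \<mu> / 2 * (norm (z - y k))\<^sup>2)) \<and>
          (\<forall>z. psi (Suc k) (v (Suc k)) \<le> psi (Suc k) z))"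

definition agmsdr_step_a ::
  "(real^'n \<Rightarrow> real^'n) \<Rightarrow> real \<Rightarrow> real \<Rightarrow>
   (nat \<Rightarrow> real^'n) \<Rightarrow> (nat \<Rightarrow> real^'n) \<Rightarrow>
   (nat \<Rightarrow> real) \<Rightarrow> (nat \<Rightarrow> real) \<Rightarrow> (nat \<Rightarrow> real) \<Rightarrow> nat \<Rightarrow> bool" where
  "agmsdr_step_a grad L \<mu> x y a A tau k \<longleftrightarrow>
     x (Suc k) = y k - (1 / L) *\<^sub>R grad (y k) \<and> a (Suc k) > 0 \<and>
     (a (Suc k))\<^sup>2 / ((tau k + \<mu> * a (Suc k)) * (A k + a (Suc k))) = 1 / L"

definition agmsdr_step_b ::
  "(real^'n \<Rightarrow> real) \<Rightarrow> (real^'n \<Rightarrow> real^'n) \<Rightarrow> real \<Rightarrow>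
   (nat \<Rightarrow> real^'n) \<Rightarrow> (nat \<Rightarrow> real^'n) \<Rightarrow> (nat \<Rightarrow> real^'n) \<Rightarrow> (nat \<Rightarrow> real) \<Rightarrow>
   (nat \<Rightarrow> real) \<Rightarrow> (nat \<Rightarrow> real) \<Rightarrow> (nat \<Rightarrow> real) \<Rightarrow> nat \<Rightarrow> bool" where
  "agmsdr_step_b f grad \<mu> x v y h a A tau k \<longleftrightarrow>
     (let d = grad (y k) /\<^sub>R norm (grad (y k));
          eq = (\<lambda>t. f (y k) - t\<^sup>2 * (norm (grad (y k)))\<^sup>2 / (2 * (tau k + \<mu> * t) * (A k + t))
                    + \<mu> * tau k * t * (norm (v k - y k))\<^sup>2 / (2 * (tau k + \<mu> * t) * (A k + t))
                    = f (x (Suc k)))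
      in h (Suc k) \<ge> 0 \<and>
         (\<forall>s\<ge>0. f (y k - h (Suc k) *\<^sub>R d) \<le> f (y k - s *\<^sub>R d)) \<and>
         x (Suc k) = y k - h (Suc k) *\<^sub>R d \<and>
         eq (a (Suc k)) \<and> (\<forall>t. eq t \<longrightarrow> t \<le> a (Suc k)))"

end

theory Submission
  imports Defs
begin

lemma descent:
  fixes f :: "real^'n \<Rightarrow> real"
  assumes sm: "L_smooth f grad L"
  shows "f (y + h) \<le> f y + grad y \<bullet> h + L/2 * (norm h)\<^sup>2"
proof -
  have gr: "\<And>z. (f has_derivative (\<lambda>u. grad z \<bullet> u)) (at z)"
    using sm unfolding L_smooth_def is_gradient_def by blast
  have lip: "\<And>p q. norm (grad p - grad q) \<le> L * norm (p - q)"
    using sm unfolding L_smooth_def by blast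
  define \<phi> where "\<phi> t = f (y + t *\<^sub>R h) - t * (grad y \<bullet> h) - L/2 * t\<^sup>2 * (norm h)\<^sup>2" for t
  have D: "(\<phi> has_real_derivative (grad (y + t *\<^sub>R h) \<bullet> h - grad y \<bullet> h - L * t * (norm h)\<^sup>2)) (at t)" for t
  proof -
    have "((\<lambda>s. y + s *\<^sub>R h) has_derivative (\<lambda>s. s *\<^sub>R h)) (at t)"
      by (auto intro!: derivative_eq_intros)
    from has_derivative_compose[OF this gr]
    have c: "((\<lambda>s. f (y + s *\<^sub>R h)) has_derivative (\<lambda>s. grad (y + t *\<^sub>R h) \<bullet> (s *\<^sub>R h))) (at t)" .
    have e: "(\<lambda>s. grad (y + t *\<^sub>R h) \<bullet> (s *\<^sub>R h)) = (*) (grad (y + t *\<^sub>R h) \<bullet> h)"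
      by (rule ext) (simp add: mult.commute)
    have 1: "((\<lambda>s. f (y + s *\<^sub>R h)) has_real_derivative (grad (y + t *\<^sub>R h) \<bullet> h)) (at t)"
      using c unfolding has_field_derivative_def e .
    show ?thesis unfolding \<phi>_def
      by (rule derivative_eq_intros 1 | simp)+
  qed
  have nonpos: "grad (y + t *\<^sub>R h) \<bullet> h - grad y \<bullet> h - L * t * (norm h)\<^sup>2 \<le> 0" if "0 \<le> t" for t
  proof -
    have "grad (y + t *\<^sub>R h) \<bullet> h - grad y \<bullet> h = (grad (y + t *\<^sub>R h) - grad y) \<bullet> h"
      by (simp add: inner_diff_left)
    also have "\<dots> \<le> norm (grad (y + t *\<^sub>R h) - grad y) * norm h" by (rule norm_cauchy_schwarz)
    also have "\<dots> \<le> (L * norm (t *\<^sub>R h)) * norm h"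
      using lip[of "y + t *\<^sub>R h" y] by (simp add: mult_right_mono)
    also have "\<dots> = L * t * (norm h)\<^sup>2" using that by (simp add: power2_eq_square)
    finally show ?thesis by simp
  qed
  have "\<phi> 1 \<le> \<phi> 0"
  proof (rule DERIV_nonpos_imp_nonincreasing[of 0 1])
    fix t :: real assume "0 \<le> t" "t \<le> 1"
    thus "\<exists>d. (\<phi> has_real_derivative d) (at t) \<and> d \<le> 0" using D[of t] nonpos[of t] by blast
  qed simp
  thus ?thesis unfolding \<phi>_def by simp
qed

lemma sc_lower:
  fixes f :: "real^'n \<Rightarrow> real"
  assumes sc: "strongly_convex f grad \<mu>" and mu: "0 < \<mu>"
  shows "f y - (norm (grad y))\<^sup>2 / (2*\<mu>) \<le> f z"
proof -
  have 1: "f z \<ge> f y + grad y \<bullet> (z - y) + \<mu>/2 * (norm (z - y))\<^sup>2"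
    using sc unfolding strongly_convex_def by blast
  have 2: "grad y \<bullet> (z - y) \<ge> - (norm (grad y) * norm (z - y))"
    using norm_cauchy_schwarz[of "-grad y" "z - y"] by simp
  have 3: "0 \<le> (\<mu> * norm (z - y) - norm (grad y))\<^sup>2 / (2*\<mu>)" using mu by simp
  have 4: "(\<mu> * norm (z - y) - norm (grad y))\<^sup>2 / (2*\<mu>) = \<mu>/2 * (norm (z - y))\<^sup>2 - norm (grad y) * norm (z - y) + (norm (grad y))\<^sup>2 / (2*\<mu>)"
    using mu by (simp add: field_simps power2_eq_square)
  show ?thesis using 1 2 3 4 by linarith
qed

lemma quad_min:
  fixes g z v y :: "'a::real_inner"
  assumes tau: "0 < \<tau>" and a: "0 \<le> a" and mu: "0 \<le> \<mu>" and gvy: "0 \<le> g \<bullet> (v - y)"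
  shows "\<tau>/2 * (norm (z - v))\<^sup>2 + a * (g \<bullet> (z - y)) + a*\<mu>/2 * (norm (z - y))\<^sup>2
     \<ge> - a\<^sup>2 * (norm g)\<^sup>2 / (2*(\<tau> + \<mu>*a)) + \<tau>*\<mu>*a*(norm (v - y))\<^sup>2 / (2*(\<tau> + \<mu>*a))"
proof -
  define w where "w = z - y"
  define u where "u = y - v"
  define t' where "t' = \<tau> + \<mu>*a"
  have t'pos: "0 < t'" using tau a mu unfolding t'_def by (simp add: add_pos_nonneg)
  have zv: "z - v = w + u" unfolding w_def u_def by simp
  have vy: "v - y = - u" unfolding u_def by simp
  have sq: "0 \<le> (norm (t' *\<^sub>R w + \<tau> *\<^sub>R u + a *\<^sub>R g))\<^sup>2" by simp
  have e1: "(norm (t' *\<^sub>R w + \<tau> *\<^sub>R u + a *\<^sub>R g))\<^sup>2 =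
     t'\<^sup>2 * (w \<bullet> w) + \<tau>\<^sup>2 * (u \<bullet> u) + a\<^sup>2 * (g \<bullet> g) + 2*t'*\<tau>*(w \<bullet> u) + 2*t'*a*(g \<bullet> w) + 2*\<tau>*a*(g \<bullet> u)"
    unfolding power2_norm_eq_inner by (simp add: inner_add_left inner_add_right inner_commute algebra_simps power2_eq_square)
  have e2: "(norm (w + u))\<^sup>2 = w \<bullet> w + 2 * (w \<bullet> u) + u \<bullet> u"
    by (simp add: power2_norm_eq_inner inner_add_left inner_add_right inner_commute)
  have e3: "(norm w)\<^sup>2 = w \<bullet> w" "(norm u)\<^sup>2 = u \<bullet> u" "(norm g)\<^sup>2 = g \<bullet> g" "(norm (-u))\<^sup>2 = u \<bullet> u"
    by (simp_all add: power2_norm_eq_inner)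
  have gu: "g \<bullet> u \<le> 0" using gvy vy by (simp add: inner_minus_right)
  have key: "2*t' * (\<tau>/2 * (w \<bullet> w + 2 * (w \<bullet> u) + u \<bullet> u) + a * (g \<bullet> w) + a*\<mu>/2 * (w \<bullet> w))
      - 2*t' * (- a\<^sup>2 * (g \<bullet> g) / (2*t') + \<tau>*\<mu>*a*(u \<bullet> u) / (2*t'))
      = (t'\<^sup>2 * (w \<bullet> w) + \<tau>\<^sup>2 * (u \<bullet> u) + a\<^sup>2 * (g \<bullet> g) + 2*t'*\<tau>*(w \<bullet> u) + 2*t'*a*(g \<bullet> w) + 2*\<tau>*a*(g \<bullet> u))
        - 2*\<tau>*a*(g \<bullet> u)"
  proof -
    have d: "2*t' * (- a\<^sup>2 * (g \<bullet> g) / (2*t') + \<tau>*\<mu>*a*(u \<bullet> u) / (2*t')) = - a\<^sup>2 * (g \<bullet> g) + \<tau>*\<mu>*a*(u \<bullet> u)"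
      using t'pos by (simp add: field_simps)
    show ?thesis unfolding d unfolding t'_def by (simp add: algebra_simps power2_eq_square)
  qed
  have "0 \<le> 2*t' * (\<tau>/2 * (w \<bullet> w + 2 * (w \<bullet> u) + u \<bullet> u) + a * (g \<bullet> w) + a*\<mu>/2 * (w \<bullet> w))
      - 2*t' * (- a\<^sup>2 * (g \<bullet> g) / (2*t') + \<tau>*\<mu>*a*(u \<bullet> u) / (2*t'))"
    unfolding key using sq e1 gu tau a mult_nonneg_nonneg[of "2*\<tau>*a" "- (g \<bullet> u)"] by simp
  hence "0 \<le> (\<tau>/2 * (w \<bullet> w + 2 * (w \<bullet> u) + u \<bullet> u) + a * (g \<bullet> w) + a*\<mu>/2 * (w \<bullet> w))
      - (- a\<^sup>2 * (g \<bullet> g) / (2*t') + \<tau>*\<mu>*a*(u \<bullet> u) / (2*t'))"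
    using t'pos by (simp add: right_diff_distrib[symmetric] zero_le_mult_iff)
  thus ?thesis unfolding zv vy e2 e3 t'_def[symmetric] w_def[symmetric] by simp
qed

lemma quad_shift:
  fixes z v y g p :: "'a::real_inner"
  assumes t': "t' = \<tau> + a*\<mu>" "t' \<noteq> 0" and p: "p = (1/t') *\<^sub>R (\<tau> *\<^sub>R v + (a*\<mu>) *\<^sub>R y - a *\<^sub>R g)"
  shows "\<tau>/2 * (norm (z - v))\<^sup>2 + a * (g \<bullet> (z - y)) + a*\<mu>/2 * (norm (z - y))\<^sup>2
     = t'/2 * (norm (z - p))\<^sup>2 + (\<tau>/2 * (v \<bullet> v) - a * (g \<bullet> y) + a*\<mu>/2 * (y \<bullet> y) - t'/2 * (p \<bullet> p))"
proof -
  have zp: "t' * (z \<bullet> p) = \<tau> * (z \<bullet> v) + a*\<mu> * (z \<bullet> y) - a * (z \<bullet> g)"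
    using t' unfolding p by (simp add: inner_diff_right inner_add_right)
  have n1: "(norm (z - v))\<^sup>2 = z \<bullet> z - 2 * (z \<bullet> v) + v \<bullet> v"
    unfolding power2_norm_eq_inner by (simp add: inner_diff_left inner_diff_right inner_commute)
  have n2: "(norm (z - y))\<^sup>2 = z \<bullet> z - 2 * (z \<bullet> y) + y \<bullet> y"
    unfolding power2_norm_eq_inner by (simp add: inner_diff_left inner_diff_right inner_commute)
  have n3: "(norm (z - p))\<^sup>2 = z \<bullet> z - 2 * (z \<bullet> p) + p \<bullet> p"
    unfolding power2_norm_eq_inner by (simp add: inner_diff_left inner_diff_right inner_commute)
  have gz: "g \<bullet> (z - y) = z \<bullet> g - g \<bullet> y" by (simp add: inner_diff_right inner_commute)
  have "t'/2 * (norm (z - p))\<^sup>2 = t'/2 * (z \<bullet> z) - t' * (z \<bullet> p) + t'/2 * (p \<bullet> p)"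
    unfolding n3 by (simp add: algebra_simps)
  also have "\<dots> = t'/2 * (z \<bullet> z) - (\<tau> * (z \<bullet> v) + a*\<mu> * (z \<bullet> y) - a * (z \<bullet> g)) + t'/2 * (p \<bullet> p)"
    unfolding zp ..
  finally have "t'/2 * (norm (z - p))\<^sup>2 = t'/2 * (z \<bullet> z) - (\<tau> * (z \<bullet> v) + a*\<mu> * (z \<bullet> y) - a * (z \<bullet> g)) + t'/2 * (p \<bullet> p)" .
  note e = this
  show ?thesis unfolding n1 n2 gz e unfolding t'(1) by (simp add: field_simps)
qed

lemma quad_min_unique:
  fixes \<phi> :: "'a::real_normed_vector \<Rightarrow> real"
  assumes "\<forall>z. \<phi> z = c + t'/2 * (norm (z - p))\<^sup>2" "0 < t'" "\<forall>z. \<phi> m \<le> \<phi> z"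
  shows "\<forall>z. \<phi> z = \<phi> m + t'/2 * (norm (z - m))\<^sup>2"
proof -
  have "\<phi> m \<le> \<phi> p" using assms(3) by blast
  hence "t'/2 * (norm (m - p))\<^sup>2 \<le> 0" using assms(1) by simp
  hence "(norm (m - p))\<^sup>2 \<le> 0" using assms(2) by (simp add: mult_le_0_iff)
  hence "m = p" by simp
  thus ?thesis using assms(1) by simp
qed

locale agm =
  fixes f :: "real^'n \<Rightarrow> real" and grad :: "real^'n \<Rightarrow> real^'n"
    and L \<mu> :: real and xs :: "real^'n"
    and x v y :: "nat \<Rightarrow> real^'n" and beta h a A tau :: "nat \<Rightarrow> real"
    and psi :: "nat \<Rightarrow> real^'n \<Rightarrow> real"
  assumes smooth: "L_smooth f grad L"
    and sconv: "strongly_convex f grad \<mu>"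
    and mu_pos: "0 < \<mu>" and mu_L: "\<mu> < L"
    and minimizer: "\<forall>z. f xs \<le> f z"
    and common: "agmsdr_common f grad \<mu> x v y beta a A tau psi"
    and options: "(\<forall>k. agmsdr_step_a grad L \<mu> x y a A tau k) \<or>
                  (\<forall>k. agmsdr_step_b f grad \<mu> x v y h a A tau k)"
    and grad_nz: "\<forall>k. grad (y k) \<noteq> 0"
begin

lemma L_pos: "0 < L" using mu_pos mu_L by simp

lemma A0: "A 0 = 0" and tau0: "tau 0 = 1" and v0: "v 0 = x 0"
  and psi0: "psi 0 z = 1/2 * (norm (z - x 0))\<^sup>2"
  and beta01: "beta k \<in> {0..1}"
  and beta_min: "b \<in> {0..1} \<Longrightarrow> f (v k + beta k *\<^sub>R (x k - v k)) \<le> f (v k + b *\<^sub>R (x k - v k))"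
  and y_eq: "y k = v k + beta k *\<^sub>R (x k - v k)"
  and A_Suc: "A (Suc k) = A k + a (Suc k)"
  and tau_Suc: "tau (Suc k) = tau k + \<mu> * a (Suc k)"
  and psi_Suc: "psi (Suc k) z = psi k z + a (Suc k) *
               (f (y k) + grad (y k) \<bullet> (z - y k) + \<mu> / 2 * (norm (z - y k))\<^sup>2)"
  and v_Suc_min: "psi (Suc k) (v (Suc k)) \<le> psi (Suc k) z"
  using common unfolding agmsdr_common_def by blast+

lemma tau_eq: "tau k = 1 + \<mu> * A k"
  by (induction k) (simp_all add: tau0 A0 tau_Suc A_Suc algebra_simps)

lemma fy_le_fx: "f (y k) \<le> f (x k)"
  using beta_min[of 1 k] y_eq[of k] by simp

lemma descent_g: "f (y k - (1/L) *\<^sub>R grad (y k)) \<le> f (y k) - (norm (grad (y k)))\<^sup>2 / (2*L)"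
proof -
  have "f (y k + (- (1/L) *\<^sub>R grad (y k))) \<le> f (y k) + grad (y k) \<bullet> (- (1/L) *\<^sub>R grad (y k)) + L/2 * (norm (- (1/L) *\<^sub>R grad (y k)))\<^sup>2"
    by (rule descent[OF smooth])
  also have "\<dots> = f (y k) - (norm (grad (y k)))\<^sup>2 / (2*L)"
    using L_pos by (simp add: power2_norm_eq_inner[symmetric] power_mult_distrib field_simps power2_eq_square)
  finally show ?thesis by simp
qed

lemma fy_gt: "f xs < f (y k)"
proof -
  have "0 < (norm (grad (y k)))\<^sup>2 / (2*L)" using grad_nz L_pos by simp
  thus ?thesis using descent_g[of k] minimizer by (smt (verit))
qed

lemma fx_gt: "f xs < f (x k)"
  using fy_gt[of k] fy_le_fx[of k] by simp

lemma fx_Suc_le: "f (x (Suc k)) \<le> f (y k) - (norm (grad (y k)))\<^sup>2 / (2*L)"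
  using options
proof
  assume "\<forall>k. agmsdr_step_a grad L \<mu> x y a A tau k"
  hence "x (Suc k) = y k - (1 / L) *\<^sub>R grad (y k)" unfolding agmsdr_step_a_def by blast
  thus ?thesis using descent_g[of k] by simp
next
  assume "\<forall>k. agmsdr_step_b f grad \<mu> x v y h a A tau k"
  hence b: "\<forall>s\<ge>0. f (y k - h (Suc k) *\<^sub>R (grad (y k) /\<^sub>R norm (grad (y k)))) \<le> f (y k - s *\<^sub>R (grad (y k) /\<^sub>R norm (grad (y k))))"
    and xe: "x (Suc k) = y k - h (Suc k) *\<^sub>R (grad (y k) /\<^sub>R norm (grad (y k)))"
    unfolding agmsdr_step_b_def Let_def by blast+
  have ng: "norm (grad (y k)) \<noteq> 0" using grad_nz by simp
  have e2: "(norm (grad (y k)) / L) *\<^sub>R (grad (y k) /\<^sub>R norm (grad (y k))) = (1/L) *\<^sub>R grad (y k)"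
    using ng by simp
  have "f (x (Suc k)) \<le> f (y k - (norm (grad (y k)) / L) *\<^sub>R (grad (y k) /\<^sub>R norm (grad (y k))))"
    unfolding xe by (rule b[rule_format]) (use L_pos in simp)
  hence "f (x (Suc k)) \<le> f (y k - (1/L) *\<^sub>R grad (y k))" by (simp only: e2)
  thus ?thesis using descent_g[of k] by simp
qed

lemma g_vy: "0 \<le> grad (y k) \<bullet> (v k - y k)"
proof (rule ccontr)
  let ?g = "grad (y k)" and ?c = "grad (y k) \<bullet> (v k - y k)" and ?D = "(norm (v k - y k))\<^sup>2"
  assume "\<not> 0 \<le> ?c"
  hence c: "?c < 0" by simp
  have Dpos: "0 < ?D"
  proof -
    have "v k - y k \<noteq> 0" using c by auto
    thus ?thesis by simp
  qed
  have bnd: "0 \<le> t * ?c + L/2 * t\<^sup>2 * ?D" if t: "0 \<le> t" "t \<le> 1" for t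
  proof -
    have e: "y k + t *\<^sub>R (v k - y k) = v k + (beta k * (1 - t)) *\<^sub>R (x k - v k)"
      unfolding y_eq[of k] by (simp add: algebra_simps)
    have "beta k * (1 - t) \<in> {0..1}" using beta01[of k] t by (auto simp: mult_le_one)
    hence "f (y k) \<le> f (v k + (beta k * (1 - t)) *\<^sub>R (x k - v k))"
      using beta_min[of "beta k * (1 - t)" k] y_eq[of k] by simp
    hence "f (y k) \<le> f (y k + t *\<^sub>R (v k - y k))" by (simp only: e)
    also have "\<dots> \<le> f (y k) + ?g \<bullet> (t *\<^sub>R (v k - y k)) + L/2 * (norm (t *\<^sub>R (v k - y k)))\<^sup>2"
      by (rule descent[OF smooth])
    also have "\<dots> = f (y k) + t * ?c + L/2 * t\<^sup>2 * ?D"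
      using t by (simp add: power_mult_distrib)
    finally show ?thesis by simp
  qed
  define t where "t = min 1 (- ?c / (L * ?D))"
  have "0 < - ?c / (L * ?D)" using c L_pos Dpos by (intro divide_pos_pos) simp_all
  hence tpos: "0 < t" unfolding t_def by simp
  have t1: "t \<le> 1" unfolding t_def by simp
  have tLD: "L * t * ?D \<le> - ?c"
  proof -
    have "t \<le> - ?c / (L * ?D)" unfolding t_def by simp
    hence "t * (L * ?D) \<le> (- ?c / (L * ?D)) * (L * ?D)"
      using L_pos Dpos by (intro mult_right_mono) simp_all
    also have "\<dots> = - ?c" using L_pos Dpos by simp
    finally have "t * (L * ?D) \<le> - ?c" .
    thus ?thesis by (simp add: algebra_simps)
  qed
  have "t * ?c + L/2 * t\<^sup>2 * ?D = t * (?c + (L * t * ?D)/2)" by (simp add: power2_eq_square algebra_simps)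
  also have "\<dots> < 0"
  proof (rule mult_pos_neg[OF tpos])
    show "?c + L * t * ?D / 2 < 0" using tLD c by linarith
  qed
  finally show False using bnd[OF _ t1] tpos by simp
qed

end

context agm begin

lemma step_b_facts:
  assumes "agmsdr_step_b f grad \<mu> x v y h a A tau k"
  shows "f (y k) - (a (Suc k))\<^sup>2 * (norm (grad (y k)))\<^sup>2 / (2 * (tau k + \<mu> * a (Suc k)) * (A k + a (Suc k)))
           + \<mu> * tau k * a (Suc k) * (norm (v k - y k))\<^sup>2 / (2 * (tau k + \<mu> * a (Suc k)) * (A k + a (Suc k)))
           = f (x (Suc k))"
    and "\<And>t. f (y k) - t\<^sup>2 * (norm (grad (y k)))\<^sup>2 / (2 * (tau k + \<mu> * t) * (A k + t))
           + \<mu> * tau k * t * (norm (v k - y k))\<^sup>2 / (2 * (tau k + \<mu> * t) * (A k + t))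
           = f (x (Suc k)) \<Longrightarrow> t \<le> a (Suc k)"
  using assms unfolding agmsdr_step_b_def Let_def by auto

lemma a_ge_b:
  assumes step: "agmsdr_step_b f grad \<mu> x v y h a A tau k" and Ann: "0 \<le> A k"
  shows "tau k / L \<le> a (Suc k)"
proof -
  define G2 where "G2 = (norm (grad (y k)))\<^sup>2"
  define d2 where "d2 = (norm (v k - y k))\<^sup>2"
  define \<tau> where "\<tau> = tau k"
  define AA where "AA = A k"
  define fy where "fy = f (y k)"
  define fx where "fx = f (x (Suc k))"
  define E where "E t = fy - t\<^sup>2 * G2 / (2 * (\<tau> + \<mu> * t) * (AA + t))
           + \<mu> * \<tau> * t * d2 / (2 * (\<tau> + \<mu> * t) * (AA + t))" for t
  have root: "\<And>t. E t = fx \<Longrightarrow> t \<le> a (Suc k)"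
    using step_b_facts(2)[OF step] unfolding E_def G2_def d2_def \<tau>_def AA_def fy_def fx_def by blast
  have tau1: "1 \<le> \<tau>" unfolding \<tau>_def tau_eq using Ann mu_pos by simp
  have AA0: "0 \<le> AA" unfolding AA_def by (rule Ann)
  have G2pos: "0 < G2" unfolding G2_def using grad_nz by simp
  have d20: "0 \<le> d2" unfolding d2_def by simp
  have fxle: "fx \<le> fy - G2 / (2*L)" unfolding fx_def fy_def G2_def by (rule fx_Suc_le)
  have alpha: "2*\<mu>*(fy - fx) - G2 < 0"
  proof -
    have "fy - G2 / (2*\<mu>) \<le> f xs" unfolding fy_def G2_def by (rule sc_lower[OF sconv mu_pos])
    moreover have "f xs < fx" unfolding fx_def by (rule fx_gt)
    ultimately have "fy - fx < G2 / (2*\<mu>)" by simp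
    hence "(fy - fx) * (2*\<mu>) < G2" using mu_pos by (simp add: pos_less_divide_eq)
    thus ?thesis by (simp add: algebra_simps)
  qed
  define t0 where "t0 = \<tau> / L"
  have t0pos: "0 < t0" unfolding t0_def using tau1 L_pos by simp
  have den_pos: "0 < 2 * (\<tau> + \<mu> * t) * (AA + t)" if "0 < t" for t
    using that tau1 AA0 mu_pos by (simp add: add_pos_nonneg)
  have Et0: "fx \<le> E t0"
  proof -
    let ?X = "(\<tau> + \<mu> * t0) * (AA + t0)"
    have X: "\<tau> * t0 \<le> ?X" using tau1 AA0 mu_pos t0pos
      by (intro mult_mono) simp_all
    have pX: "0 < \<tau> * t0" using tau1 t0pos by simp
    have "t0\<^sup>2 * G2 / (2 * (\<tau> + \<mu> * t0) * (AA + t0)) = (t0\<^sup>2 * G2 / 2) / ?X" by (simp add: algebra_simps)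
    also have "\<dots> \<le> (t0\<^sup>2 * G2 / 2) / (\<tau> * t0)"
      using X pX G2pos by (intro divide_left_mono) simp_all
    also have "\<dots> = G2 / (2*L)" unfolding t0_def using tau1 L_pos by (simp add: field_simps power2_eq_square)
    finally have 1: "t0\<^sup>2 * G2 / (2 * (\<tau> + \<mu> * t0) * (AA + t0)) \<le> G2 / (2*L)" .
    have 2: "0 \<le> \<mu> * \<tau> * t0 * d2 / (2 * (\<tau> + \<mu> * t0) * (AA + t0))"
      using den_pos[OF t0pos] mu_pos tau1 t0pos d20 by simp
    show ?thesis unfolding E_def using 1 2 fxle by linarith
  qed
  define \<alpha> where "\<alpha> = 2*\<mu>*(fy - fx) - G2"
  define \<beta> where "\<beta> = 2*(\<tau> + \<mu>*AA)*(fy - fx) + \<mu>*\<tau>*d2"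
  define \<gamma> where "\<gamma> = 2*\<tau>*AA*(fy - fx)"
  have Eform: "E t - fx = (\<alpha>*t\<^sup>2 + \<beta>*t + \<gamma>) / (2 * (\<tau> + \<mu> * t) * (AA + t))" if "0 < t" for t
  proof -
    have dp1: "\<tau> + \<mu> * t \<noteq> 0" using that tau1 mu_pos by (smt (z3) mult_pos_pos)
    have dp2: "AA + t \<noteq> 0" using that AA0 by simp
    define D where "D = 2 * (\<tau> + \<mu> * t) * (AA + t)"
    have D0: "D \<noteq> 0" unfolding D_def using dp1 dp2 by simp
    have "E t - fx = (fy - fx) - t\<^sup>2 * G2 / D + \<mu> * \<tau> * t * d2 / D"
      unfolding E_def D_def by simp
    also have "\<dots> = ((fy - fx) * D - t\<^sup>2 * G2 + \<mu> * \<tau> * t * d2) / D"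
      using D0 by (simp add: diff_divide_distrib add_divide_distrib)
    also have "(fy - fx) * D - t\<^sup>2 * G2 + \<mu> * \<tau> * t * d2 = \<alpha>*t\<^sup>2 + \<beta>*t + \<gamma>"
      unfolding D_def \<alpha>_def \<beta>_def \<gamma>_def by (simp add: algebra_simps power2_eq_square)
    finally show ?thesis unfolding D_def .
  qed
  have al: "\<alpha> < 0" unfolding \<alpha>_def by (rule alpha)
  define B where "B = \<bar>\<beta>\<bar> + \<bar>\<gamma>\<bar>"
  define T where "T = max (B / (- \<alpha>) + 1) t0"
  have T1: "B / (- \<alpha>) + 1 \<le> T" unfolding T_def by simp
  have B0: "0 \<le> B" unfolding B_def by simp
  have "0 \<le> B / (- \<alpha>)" using B0 al by (intro divide_nonneg_pos) simp_all
  hence Tge1: "1 \<le> T" using T1 by linarith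
  have Tt0: "t0 \<le> T" unfolding T_def by simp
  have PT: "\<alpha>*T\<^sup>2 + \<beta>*T + \<gamma> < 0"
  proof -
    have "\<beta>*T \<le> \<bar>\<beta>\<bar>*T" using Tge1 by (intro mult_right_mono) simp_all
    moreover have "\<gamma> \<le> \<bar>\<gamma>\<bar>*T"
    proof -
      have "\<bar>\<gamma>\<bar> \<le> \<bar>\<gamma>\<bar>*T" using Tge1 by (simp add: mult_le_cancel_left1)
      thus ?thesis by linarith
    qed
    ultimately have "\<alpha>*T\<^sup>2 + \<beta>*T + \<gamma> \<le> T * (\<alpha>*T + B)" unfolding B_def by (simp add: algebra_simps power2_eq_square)
    also have "\<alpha>*T + B \<le> \<alpha>*(B / (- \<alpha>) + 1) + B" using T1 al by (intro add_right_mono mult_left_mono_neg) simp_all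
    hence "T * (\<alpha>*T + B) \<le> T * (\<alpha>*(B / (- \<alpha>) + 1) + B)" using Tge1 by (intro mult_left_mono) simp_all
    also have "\<alpha>*(B / (- \<alpha>) + 1) + B = \<alpha>" using al by (simp add: field_simps)
    finally have "\<alpha>*T\<^sup>2 + \<beta>*T + \<gamma> \<le> T * \<alpha>" .
    also have "T * \<alpha> < 0" using Tge1 al by (simp add: mult_pos_neg)
    finally show ?thesis .
  qed
  have ET: "E T \<le> fx"
  proof -
    have "0 < T" using Tge1 by simp
    from Eform[OF this] den_pos[OF this] PT have "E T - fx < 0" by (simp add: divide_neg_pos)
    thus ?thesis by simp
  qed
  have cont: "continuous_on {t0..T} E"
  proof -
    have pos: "0 < \<tau> + \<mu>*t \<and> 0 < AA + t" if "t0 \<le> t" for t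
    proof -
      have "0 < \<mu>*t" using mu_pos t0pos that by simp
      thus ?thesis using tau1 AA0 t0pos that by simp
    qed
    show ?thesis unfolding E_def by (intro continuous_intros) (use pos in force)+
  qed
  obtain r where r: "t0 \<le> r" "r \<le> T" "E r = fx"
    using IVT2'[of E T fx t0, OF ET Et0 Tt0 cont] by blast
  have "r \<le> a (Suc k)" using root r(3) .
  thus ?thesis using r(1) unfolding t0_def \<tau>_def by simp
qed

end

context agm begin

lemma a_pos_step: "0 \<le> A k \<Longrightarrow> 0 < a (Suc k)"
  using options
proof
  assume "\<forall>k. agmsdr_step_a grad L \<mu> x y a A tau k"
  thus ?thesis unfolding agmsdr_step_a_def by blast
next
  assume s: "\<forall>k. agmsdr_step_b f grad \<mu> x v y h a A tau k" and "0 \<le> A k"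
  hence "tau k / L \<le> a (Suc k)" using a_ge_b by blast
  moreover have "0 < tau k / L" using \<open>0 \<le> A k\<close> mu_pos L_pos unfolding tau_eq
    by (intro divide_pos_pos) (simp_all add: add_pos_nonneg)
  ultimately show ?thesis by simp
qed

lemma A_nonneg: "0 \<le> A k"
proof (induction k)
  case 0 thus ?case by (simp add: A0)
next
  case (Suc k) thus ?case using a_pos_step[OF Suc] by (simp add: A_Suc)
qed

lemma a_pos: "0 < a (Suc k)" using a_pos_step[OF A_nonneg] .

lemma A_Suc_pos: "0 < A (Suc k)" using A_nonneg[of k] a_pos[of k] by (simp add: A_Suc)

lemma tau_ge1: "1 \<le> tau k" using A_nonneg[of k] mu_pos unfolding tau_eq by simp

lemma key_and_ratio:
  shows "1/L \<le> (a (Suc k))\<^sup>2 / (tau (Suc k) * A (Suc k))"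
    and "f (x (Suc k)) \<le> f (y k) - (a (Suc k))\<^sup>2 * (norm (grad (y k)))\<^sup>2 / (2 * tau (Suc k) * A (Suc k))
            + \<mu> * tau k * a (Suc k) * (norm (v k - y k))\<^sup>2 / (2 * tau (Suc k) * A (Suc k))"
proof -
  define G2 where "G2 = (norm (grad (y k)))\<^sup>2"
  define d2 where "d2 = (norm (v k - y k))\<^sup>2"
  define r where "r = (a (Suc k))\<^sup>2 / (tau (Suc k) * A (Suc k))"
  define s where "s = \<mu> * tau k * a (Suc k) * d2 / (2 * tau (Suc k) * A (Suc k))"
  have G2pos: "0 < G2" unfolding G2_def using grad_nz by simp
  have tpos: "0 < tau (Suc k)" using tau_ge1[of "Suc k"] by simp
  have Apos: "0 < A (Suc k)" by (rule A_Suc_pos)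
  have s0: "0 \<le> s" unfolding s_def d2_def using mu_pos tau_ge1[of k] a_pos[of k] tpos Apos
    by (intro divide_nonneg_pos mult_nonneg_nonneg) simp_all
  have rG: "(a (Suc k))\<^sup>2 * G2 / (2 * tau (Suc k) * A (Suc k)) = r * G2 / 2"
    unfolding r_def using tpos Apos by (simp add: field_simps)
  have fxle: "f (x (Suc k)) \<le> f (y k) - G2 / (2*L)" unfolding G2_def by (rule fx_Suc_le)
  have "1/L \<le> r \<and> f (x (Suc k)) \<le> f (y k) - r * G2 / 2 + s"
    using options
  proof
    assume "\<forall>k. agmsdr_step_a grad L \<mu> x y a A tau k"
    hence "(a (Suc k))\<^sup>2 / ((tau k + \<mu> * a (Suc k)) * (A k + a (Suc k))) = 1 / L"
      unfolding agmsdr_step_a_def by blast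
    hence r: "r = 1/L" unfolding r_def tau_Suc A_Suc .
    have "G2 / (2*L) = r * G2 / 2" unfolding r by simp
    thus ?thesis using fxle s0 r by simp
  next
    assume "\<forall>k. agmsdr_step_b f grad \<mu> x v y h a A tau k"
    from step_b_facts(1)[OF this[rule_format, of k]]
    have eq0: "f (y k) - (a (Suc k))\<^sup>2 * G2 / (2 * (tau k + \<mu> * a (Suc k)) * (A k + a (Suc k)))
           + \<mu> * tau k * a (Suc k) * d2 / (2 * (tau k + \<mu> * a (Suc k)) * (A k + a (Suc k)))
           = f (x (Suc k))" unfolding G2_def d2_def .
    have rG': "(a (Suc k))\<^sup>2 * G2 / (2 * (tau k + \<mu> * a (Suc k)) * (A k + a (Suc k))) = r * G2 / 2"
      using rG unfolding tau_Suc A_Suc .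
    have s': "\<mu> * tau k * a (Suc k) * d2 / (2 * (tau k + \<mu> * a (Suc k)) * (A k + a (Suc k))) = s"
      unfolding s_def tau_Suc A_Suc ..
    have eq: "f (y k) - r * G2 / 2 + s = f (x (Suc k))"
      using eq0 unfolding rG' s' .
    have "G2 / (2*L) \<le> r * G2 / 2" using eq fxle s0 by linarith
    hence "(1/L) * G2 \<le> r * G2" by simp
    hence "1/L \<le> r" using G2pos by (metis mult_le_cancel_right_pos)
    thus ?thesis using eq by simp
  qed
  thus "1/L \<le> (a (Suc k))\<^sup>2 / (tau (Suc k) * A (Suc k))"
    and "f (x (Suc k)) \<le> f (y k) - (a (Suc k))\<^sup>2 * (norm (grad (y k)))\<^sup>2 / (2 * tau (Suc k) * A (Suc k))
            + \<mu> * tau k * a (Suc k) * (norm (v k - y k))\<^sup>2 / (2 * tau (Suc k) * A (Suc k))"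
    unfolding r_def[symmetric] using rG unfolding G2_def s_def d2_def by simp_all
qed

lemma growth: "tau (Suc k) * A (Suc k) \<le> (a (Suc k))\<^sup>2 * L"
proof -
  have p: "0 < tau (Suc k) * A (Suc k)" using tau_ge1[of "Suc k"] A_Suc_pos[of k] by simp
  from key_and_ratio(1)[of k] have "1/L * (tau (Suc k) * A (Suc k)) \<le> (a (Suc k))\<^sup>2"
    using p by (simp add: le_divide_eq)
  thus ?thesis using L_pos by (simp add: field_simps)
qed

end

lemma aux_mul: "(P::real) \<noteq> 0 \<Longrightarrow> D \<noteq> 0 \<Longrightarrow> P*(F - X/(D*P) + Y/(D*P)) = P*F - X/D + Y/D"
  by (simp add: field_simps)

context agm begin

lemma psi_quad: "psi k z = psi k (v k) + tau k / 2 * (norm (z - v k))\<^sup>2"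
proof (induction k arbitrary: z)
  case 0 thus ?case by (simp add: psi0 v0 tau0)
next
  case (Suc k)
  define \<tau> where "\<tau> = tau k"
  define aa where "aa = a (Suc k)"
  define g where "g = grad (y k)"
  define t' where "t' = \<tau> + aa * \<mu>"
  define p where "p = (1/t') *\<^sub>R (\<tau> *\<^sub>R v k + (aa*\<mu>) *\<^sub>R y k - aa *\<^sub>R g)"
  define K where "K = \<tau>/2 * (v k \<bullet> v k) - aa * (g \<bullet> y k) + aa*\<mu>/2 * (y k \<bullet> y k) - t'/2 * (p \<bullet> p)"
  have t'eq: "t' = tau (Suc k)" unfolding t'_def \<tau>_def aa_def tau_Suc by simp
  have t'pos: "0 < t'" unfolding t'eq using tau_ge1[of "Suc k"] by simp
  have form: "\<forall>z. psi (Suc k) z = (psi k (v k) + aa * f (y k) + K) + t'/2 * (norm (z - p))\<^sup>2"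
  proof
    fix z
    have "psi (Suc k) z = psi k (v k) + aa * f (y k) +
       (\<tau>/2 * (norm (z - v k))\<^sup>2 + aa * (g \<bullet> (z - y k)) + aa*\<mu>/2 * (norm (z - y k))\<^sup>2)"
      unfolding psi_Suc Suc[of z] \<tau>_def aa_def g_def by (simp add: algebra_simps)
    also have "\<tau>/2 * (norm (z - v k))\<^sup>2 + aa * (g \<bullet> (z - y k)) + aa*\<mu>/2 * (norm (z - y k))\<^sup>2
       = t'/2 * (norm (z - p))\<^sup>2 + K"
      unfolding K_def by (rule quad_shift[OF t'_def _ p_def]) (use t'pos in simp)
    finally show "psi (Suc k) z = (psi k (v k) + aa * f (y k) + K) + t'/2 * (norm (z - p))\<^sup>2" by simp
  qed
  have "\<forall>z. psi (Suc k) z = psi (Suc k) (v (Suc k)) + t'/2 * (norm (z - v (Suc k)))\<^sup>2"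
    by (rule quad_min_unique[OF form t'pos]) (use v_Suc_min in blast)
  thus ?case unfolding t'eq by blast
qed

lemma v_min: "psi k (v k) \<le> psi k z"
  using psi_quad[of k z] tau_ge1[of k] by simp

lemma psi_upper: "psi k z \<le> A k * f z + 1/2 * (norm (z - x 0))\<^sup>2"
proof (induction k)
  case 0 thus ?case by (simp add: psi0 A0)
next
  case (Suc k)
  have "f (y k) + grad (y k) \<bullet> (z - y k) + \<mu> / 2 * (norm (z - y k))\<^sup>2 \<le> f z"
    using sconv unfolding strongly_convex_def by blast
  hence "a (Suc k) * (f (y k) + grad (y k) \<bullet> (z - y k) + \<mu> / 2 * (norm (z - y k))\<^sup>2) \<le> a (Suc k) * f z"
    using a_pos[of k] by (intro mult_left_mono) simp_all
  thus ?case unfolding psi_Suc A_Suc using Suc by (simp add: algebra_simps)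
qed

lemma psi_lower: "A k * f (x k) \<le> psi k (v k)"
proof (induction k)
  case 0 thus ?case by (simp add: A0 psi0 v0)
next
  case (Suc k)
  define \<tau> where "\<tau> = tau k"
  define aa where "aa = a (Suc k)"
  define g where "g = grad (y k)"
  define w where "w = v (Suc k)"
  define AA where "AA = A k"
  have taupos: "0 < \<tau>" unfolding \<tau>_def using tau_ge1[of k] by simp
  have aa0: "0 \<le> aa" unfolding aa_def using a_pos[of k] by simp
  have AApos: "0 < AA + aa" unfolding AA_def aa_def using A_Suc_pos[of k] by (simp add: A_Suc)
  have t'eq: "\<tau> + \<mu> * aa = tau (Suc k)" unfolding \<tau>_def aa_def tau_Suc ..
  have A'eq: "AA + aa = A (Suc k)" unfolding AA_def aa_def A_Suc ..
  have t'pos: "0 < \<tau> + \<mu> * aa" unfolding t'eq using tau_ge1[of "Suc k"] by simp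
  have qm: "\<tau>/2 * (norm (w - v k))\<^sup>2 + aa * (g \<bullet> (w - y k)) + aa*\<mu>/2 * (norm (w - y k))\<^sup>2
     \<ge> - aa\<^sup>2 * (norm g)\<^sup>2 / (2*(\<tau> + \<mu>*aa)) + \<tau>*\<mu>*aa*(norm (v k - y k))\<^sup>2 / (2*(\<tau> + \<mu>*aa))"
    by (rule quad_min[OF taupos aa0 less_imp_le[OF mu_pos]]) (unfold g_def, rule g_vy)
  have fyx: "AA * f (y k) \<le> AA * f (x k)" unfolding AA_def
    using fy_le_fx[of k] A_nonneg[of k] by (intro mult_left_mono) simp_all
  have "psi (Suc k) w = psi k (v k) + aa * f (y k) +
       (\<tau>/2 * (norm (w - v k))\<^sup>2 + aa * (g \<bullet> (w - y k)) + aa*\<mu>/2 * (norm (w - y k))\<^sup>2)"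
    unfolding psi_Suc psi_quad[of k w] \<tau>_def aa_def g_def by (simp add: algebra_simps)
  hence lb: "(AA + aa) * f (y k) - aa\<^sup>2 * (norm g)\<^sup>2 / (2*(\<tau> + \<mu>*aa)) + \<tau>*\<mu>*aa*(norm (v k - y k))\<^sup>2 / (2*(\<tau> + \<mu>*aa))
     \<le> psi (Suc k) w"
    using qm fyx Suc unfolding AA_def by (simp add: algebra_simps)
  have key: "f (x (Suc k)) \<le> f (y k) - aa\<^sup>2 * (norm g)\<^sup>2 / (2 * (\<tau> + \<mu> * aa) * (AA + aa))
            + \<mu> * \<tau> * aa * (norm (v k - y k))\<^sup>2 / (2 * (\<tau> + \<mu> * aa) * (AA + aa))"
    unfolding t'eq A'eq unfolding \<tau>_def aa_def g_def by (rule key_and_ratio(2))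
  have "(AA + aa) * f (x (Suc k)) \<le> (AA + aa) * (f (y k) - aa\<^sup>2 * (norm g)\<^sup>2 / (2 * (\<tau> + \<mu> * aa) * (AA + aa))
            + \<mu> * \<tau> * aa * (norm (v k - y k))\<^sup>2 / (2 * (\<tau> + \<mu> * aa) * (AA + aa)))"
    using key AApos by (intro mult_left_mono) simp_all
  also have "\<dots> = (AA + aa) * f (y k) - aa\<^sup>2 * (norm g)\<^sup>2 / (2*(\<tau> + \<mu>*aa)) + \<tau>*\<mu>*aa*(norm (v k - y k))\<^sup>2 / (2*(\<tau> + \<mu>*aa))"
  proof -
    have h: "(AA + aa) * (X / (2 * (\<tau> + \<mu> * aa) * (AA + aa))) = X / (2 * (\<tau> + \<mu> * aa))" for X
      using AApos by simp
    have m: "\<mu> * \<tau> * aa * (norm (v k - y k))\<^sup>2 = \<tau>*\<mu>*aa*(norm (v k - y k))\<^sup>2" by simp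
    have D: "2 * (\<tau> + \<mu> * aa) \<noteq> 0" using t'pos by simp
    show ?thesis unfolding m by (rule aux_mul) (use AApos D in simp_all)
  qed
  finally show ?case using lb unfolding A'eq w_def by simp
qed

end

context agm begin

lemma rate:
  assumes "1 \<le> k"
  shows "f (x k) - f xs \<le> (norm (x 0 - xs))\<^sup>2 / (2 * A k)"
proof -
  obtain j where kj: "k = Suc j" using assms by (cases k) auto
  have Ap: "0 < A k" unfolding kj by (rule A_Suc_pos)
  have "A k * f (x k) \<le> A k * f xs + 1/2 * (norm (xs - x 0))\<^sup>2"
    using psi_lower[of k] v_min[of k xs] psi_upper[of k xs] by linarith
  hence "(f (x k) - f xs) * (2 * A k) \<le> (norm (x 0 - xs))\<^sup>2"
    by (simp add: norm_minus_commute algebra_simps)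
  thus ?thesis using Ap by (simp add: pos_le_divide_eq)
qed

lemma A'_le: "A (Suc k) \<le> L * (a (Suc k))\<^sup>2"
proof -
  have "1 * A (Suc k) \<le> tau (Suc k) * A (Suc k)"
    using tau_ge1[of "Suc k"] A_Suc_pos[of k] by (intro mult_right_mono) simp_all
  thus ?thesis using growth[of k] by (simp add: algebra_simps)
qed

lemma A_sq: "(real k)\<^sup>2 \<le> 4 * L * A k"
proof (induction k)
  case 0 thus ?case by (simp add: A0)
next
  case (Suc k)
  define p where "p = sqrt (A (Suc k))"
  define r where "r = sqrt (A k)"
  define s where "s = 2 * sqrt L"
  have r0: "0 \<le> r" unfolding r_def using A_nonneg[of k] by simp
  have p0: "0 < p" unfolding p_def using A_Suc_pos[of k] by simp
  have pp: "p\<^sup>2 = A (Suc k)" unfolding p_def using A_Suc_pos[of k] by simp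
  have rr: "r\<^sup>2 = A k" unfolding r_def using A_nonneg[of k] by simp
  have ss: "s\<^sup>2 = 4 * L" unfolding s_def using L_pos by (simp add: power_mult_distrib)
  have s0: "0 \<le> s" unfolding s_def using L_pos by simp
  have rp: "r \<le> p" unfolding r_def p_def using a_pos[of k] A_nonneg[of k] by (simp add: A_Suc)
  have aeq: "a (Suc k) = p\<^sup>2 - r\<^sup>2" using pp rr by (simp add: A_Suc)
  have "p\<^sup>2 \<le> L * (p\<^sup>2 - r\<^sup>2)\<^sup>2" using A'_le[of k] unfolding pp[symmetric] aeq .
  also have "(p\<^sup>2 - r\<^sup>2)\<^sup>2 = (p - r)\<^sup>2 * (p + r)\<^sup>2" by (simp add: power2_eq_square algebra_simps)
  also have "L * ((p - r)\<^sup>2 * (p + r)\<^sup>2) \<le> L * ((p - r)\<^sup>2 * (2*p)\<^sup>2)"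
    using L_pos r0 rp by (intro mult_left_mono power_mono) simp_all
  finally have "p\<^sup>2 * 1 \<le> p\<^sup>2 * (4 * L * (p - r)\<^sup>2)" by (simp add: algebra_simps power2_eq_square)
  hence "1 \<le> 4 * L * (p - r)\<^sup>2" using p0 by (simp add: mult_le_cancel_left)
  hence "1 \<le> (s * (p - r))\<^sup>2" using ss by (simp add: power_mult_distrib)
  hence "sqrt 1 \<le> sqrt ((s * (p - r))\<^sup>2)" by (rule real_sqrt_le_mono)
  hence d1: "1 \<le> s * (p - r)" using s0 rp by simp
  have "(real k)\<^sup>2 \<le> (s * r)\<^sup>2" using Suc ss rr by (simp add: power_mult_distrib)
  hence "sqrt ((real k)\<^sup>2) \<le> sqrt ((s * r)\<^sup>2)" by (rule real_sqrt_le_mono)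
  hence "real k \<le> s * r" using s0 r0 by simp
  hence "real (Suc k) \<le> s * p" using d1 by (simp add: algebra_simps)
  hence "(real (Suc k))\<^sup>2 \<le> (s * p)\<^sup>2" by (intro power_mono) simp_all
  also have "\<dots> = 4 * L * A (Suc k)" using ss pp by (simp add: power_mult_distrib)
  finally show ?case .
qed

definition q where "q = sqrt (\<mu> / L)"

lemma q_bounds: "0 \<le> q" "q < 1"
  unfolding q_def using mu_pos mu_L L_pos by (simp_all add: divide_less_eq)

lemma A_contract: "A k \<le> (1 - q) * A (Suc k)"
proof -
  have Ap: "0 < A (Suc k)" by (rule A_Suc_pos)
  have "\<mu> * A (Suc k) \<le> tau (Suc k)" unfolding tau_eq by simp
  hence "\<mu> * A (Suc k) * A (Suc k) \<le> tau (Suc k) * A (Suc k)" using Ap by (intro mult_right_mono) simp_all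
  hence "\<mu> * (A (Suc k))\<^sup>2 \<le> L * (a (Suc k))\<^sup>2" using growth[of k] by (simp add: power2_eq_square algebra_simps)
  hence "\<mu> / L * (A (Suc k))\<^sup>2 \<le> (a (Suc k))\<^sup>2" using L_pos by (simp add: field_simps)
  hence "sqrt (\<mu> / L * (A (Suc k))\<^sup>2) \<le> sqrt ((a (Suc k))\<^sup>2)" by (rule real_sqrt_le_mono)
  moreover have "sqrt (\<mu> / L * (A (Suc k))\<^sup>2) = q * A (Suc k)" unfolding q_def using Ap
    by (subst real_sqrt_mult) simp
  moreover have "sqrt ((a (Suc k))\<^sup>2) = a (Suc k)" using a_pos[of k] by simp
  ultimately have "q * A (Suc k) \<le> a (Suc k)" by simp
  thus ?thesis by (simp add: A_Suc algebra_simps)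
qed

lemma A_lin: "1 / L \<le> A (Suc j) * (1 - q) ^ j"
proof (induction j)
  case 0
  have "tau 1 * A 1 \<le> (a 1)\<^sup>2 * L" using growth[of 0] by simp
  moreover have "A 1 = a 1" using A_Suc[of 0] A0 by simp
  ultimately have "tau 1 * a 1 \<le> a 1 * (a 1 * L)" by (simp add: power2_eq_square algebra_simps)
  hence "tau 1 \<le> a 1 * L" using a_pos[of 0] by simp
  hence "1 \<le> a 1 * L" using tau_ge1[of 1] by simp
  thus ?case using \<open>A 1 = a 1\<close> L_pos by (simp add: divide_le_eq)
next
  case (Suc j)
  have "A (Suc j) * (1 - q) ^ j \<le> ((1 - q) * A (Suc (Suc j))) * (1 - q) ^ j"
    using A_contract[of "Suc j"] q_bounds by (intro mult_right_mono) simp_all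
  thus ?case using Suc by (simp add: algebra_simps)
qed

lemma final: "\<forall>k\<ge>1. f (x k) - f xs \<le>
           min (2 * L * (norm (x 0 - xs))\<^sup>2 / (real k)\<^sup>2)
               ((1 - sqrt (\<mu> / L)) ^ (k - 1) * L * (norm (x 0 - xs))\<^sup>2)"
proof (intro allI impI)
  fix k :: nat assume k1: "1 \<le> k"
  obtain j where kj: "k = Suc j" using k1 by (cases k) auto
  define R2 where "R2 = (norm (x 0 - xs))\<^sup>2"
  have R0: "0 \<le> R2" unfolding R2_def by simp
  have Ap: "0 < A k" unfolding kj by (rule A_Suc_pos)
  have r: "f (x k) - f xs \<le> R2 / (2 * A k)" unfolding R2_def by (rule rate[OF k1])
  have kpos: "0 < (real k)\<^sup>2" using k1 by simp
  have b1: "R2 / (2 * A k) \<le> 2 * L * R2 / (real k)\<^sup>2"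
  proof -
    have "R2 * (real k)\<^sup>2 \<le> R2 * (4 * L * A k)" using A_sq[of k] R0 by (intro mult_left_mono)
    thus ?thesis using Ap kpos by (simp add: field_simps)
  qed
  have b2: "R2 / (2 * A k) \<le> (1 - q) ^ (k - 1) * L * R2"
  proof -
    have c: "1 \<le> L * (A k * (1 - q) ^ (k - 1))" using A_lin[of j] L_pos unfolding kj by (simp add: divide_le_eq mult_ac)
    have "R2 * 1 \<le> R2 * (2 * (L * (A k * (1 - q) ^ (k - 1))))" using c R0 by (intro mult_left_mono) simp_all
    hence "R2 \<le> (1 - q) ^ (k - 1) * L * R2 * (2 * A k)" by (simp add: algebra_simps)
    thus ?thesis using Ap by (simp add: pos_divide_le_eq)
  qed
  show "f (x k) - f xs \<le> min (2 * L * (norm (x 0 - xs))\<^sup>2 / (real k)\<^sup>2)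
               ((1 - sqrt (\<mu> / L)) ^ (k - 1) * L * (norm (x 0 - xs))\<^sup>2)"
    using r b1 b2 unfolding R2_def q_def by simp
qed

end

theorem mainTheorem7:
  fixes f :: "real^'n \<Rightarrow> real" and grad :: "real^'n \<Rightarrow> real^'n"
    and L \<mu> :: real and xs :: "real^'n"
    and x v y :: "nat \<Rightarrow> real^'n" and beta h a A tau :: "nat \<Rightarrow> real"
    and psi :: "nat \<Rightarrow> real^'n \<Rightarrow> real"
  assumes smooth: "L_smooth f grad L"
    and sconv: "strongly_convex f grad \<mu>"
    and mu_pos: "0 < \<mu>" and mu_L: "\<mu> < L"
    and minimizer: "\<forall>z. f xs \<le> f z"
    and common: "agmsdr_common f grad \<mu> x v y beta a A tau psi"
    and options: "(\<forall>k. agmsdr_step_a grad L \<mu> x y a A tau k) \<or>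
                  (\<forall>k. agmsdr_step_b f grad \<mu> x v y h a A tau k)"
    and grad_nz: "\<forall>k. grad (y k) \<noteq> 0"
  shows "\<forall>k\<ge>1. f (x k) - f xs \<le>
           min (2 * L * (norm (x 0 - xs))\<^sup>2 / (real k)\<^sup>2)
               ((1 - sqrt (\<mu> / L)) ^ (k - 1) * L * (norm (x 0 - xs))\<^sup>2)"
proof -
  interpret agm f grad L \<mu> xs x v y beta h a A tau psi
    unfolding agm_def using assms by blast
  show ?thesis by (rule final)
qed

end
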